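(* Let $X$ be a Fréchet space and let $\Gamma:[0,1]\to cb(X)$ be a multifunction. Then the following are equivalent: (i) $\Gamma$ is Bochner measurable; (ii) $\Gamma$ is totally measurable; (iii) $\Gamma$ is measurable by seminorm.
   Context: $X$ is a Fréchet space (metrizable, complete, locally convex) whose topology is generated by an increasing sufficient sequence of seminorms $(p_i)_{i\in\mathbb N}$, with the translation-invariant metric $d(x,y)=\sum_{i\ge1}2^{-i}\frac{p_i(x-y)}{1+p_i(x-y)}$. $cb(X)$ denotes the family of nonempty closed bounded convex subsets of $X$. For $A,B\in cb(X)$: $H(A,B)=\max(e_d(A,B),e_d(B,A))$ with $e_d(A,B)=\sup_{a\in A}\inf_{b\in B}d(a,b)$ (Hausdorff metric), and for each $i$, $H_i(A,B)=\max(e_i(A,B),e_i(B,A))$ with $e_i(A,B)=\sup_{a\in A}\inf_{b\in B}p_i(a-b)$. $[0,1]$ carries Lebesgue measure $\mu$ and the $\sigma$-algebra $\mathcal L$ of Lebesgue measurable sets. A simple multifunction is $\Gamma=\sum_{j=1}^p\chi_{A_j}C_j$ with $A_j\in\mathcal L$ pairwise disjoint and $C_j\in cb(X)$. $\Gamma$ is Bochner measurable if there are simple multifunctions $\Gamma_n:[0,1]\to cb(X)$ with $H(\Gamma_n(t),\Gamma(t))\to0$ for a.e. $t$; totally measurable if there are simple multifunctions $\Gamma_n:[0,1]\to cb(X)$ such that for every $i$, $H_i(\Gamma_n(t),\Gamma(t))\to0$ for a.e. $t$; measurable by seminorm if for every $i$ there are simple multifunctions $\Gamma_n^i:[0,1]\to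 cb(X)$ with $H_i(\Gamma^i_n(t),\Gamma(t))\to0$ for a.e. $t$. *)

theory Defs
  imports "HOL-Analysis.Analysis"
begin

text \<open>Seminorms are indexed from 0 (p 0, p 1, ...), so the paper's p_i is our p (i-1).\<close>

definition is_seminorm :: "('a::real_vector \<Rightarrow> real) \<Rightarrow> bool" where
  "is_seminorm q \<longleftrightarrow> (\<forall>x y. q (x + y) \<le> q x + q y) \<and> (\<forall>c x. q (c *\<^sub>R x) = \<bar>c\<bar> * q x)"

definition fdist :: "(nat \<Rightarrow> 'a::real_vector \<Rightarrow> real) \<Rightarrow> 'a \<Rightarrow> 'a \<Rightarrow> real" where
  "fdist p x y = (\<Sum>i. (1/2) ^ Suc i * (p i (x - y) / (1 + p i (x - y))))"

definition frechet_seminorms :: "(nat \<Rightarrow> 'a::real_vector \<Rightarrow> real) \<Rightarrow> bool" where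
  "frechet_seminorms p \<longleftrightarrow>
     (\<forall>i. is_seminorm (p i)) \<and>
     (\<forall>i x. p i x \<le> p (Suc i) x) \<and>
     (\<forall>x. (\<forall>i. p i x = 0) \<longrightarrow> x = 0) \<and>
     (\<forall>s. (\<forall>e>0. \<exists>N. \<forall>m\<ge>N. \<forall>n\<ge>N. fdist p (s m) (s n) < e)
           \<longrightarrow> (\<exists>x. (\<lambda>n. fdist p (s n) x) \<longlonglongrightarrow> 0))"

definition cb :: "(nat \<Rightarrow> 'a::real_vector \<Rightarrow> real) \<Rightarrow> 'a set set" where
  "cb p = {A. A \<noteq> {} \<and> convex A \<and>
     (\<forall>i. \<exists>M. \<forall>a\<in>A. p i a \<le> M) \<and>
     (\<forall>s x. (\<forall>n. s n \<in> A) \<and> (\<lambda>n. fdist p (s n) x) \<longlonglongrightarrow> 0 \<longrightarrow> x \<in> A)}"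

definition excess :: "('a \<Rightarrow> 'a \<Rightarrow> real) \<Rightarrow> 'a set \<Rightarrow> 'a set \<Rightarrow> real" where
  "excess f A B = (SUP a\<in>A. INF b\<in>B. f a b)"

definition hausdorff :: "('a \<Rightarrow> 'a \<Rightarrow> real) \<Rightarrow> 'a set \<Rightarrow> 'a set \<Rightarrow> real" where
  "hausdorff f A B = max (excess f A B) (excess f B A)"

abbreviation H :: "(nat \<Rightarrow> 'a::real_vector \<Rightarrow> real) \<Rightarrow> 'a set \<Rightarrow> 'a set \<Rightarrow> real" where
  "H p \<equiv> hausdorff (fdist p)"

abbreviation Hi :: "(nat \<Rightarrow> 'a::real_vector \<Rightarrow> real) \<Rightarrow> nat \<Rightarrow> 'a set \<Rightarrow> 'a set \<Rightarrow> real" where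
  "Hi p i \<equiv> hausdorff (\<lambda>a b. p i (a - b))"

text \<open>Simple multifunction on [0,1]: sum of chi_{A_j} C_j, A_j pairwise disjoint Lebesgue
  measurable; outside the union of the A_j the value is {0} (= 0 * C_j).\<close>
definition simple_mf :: "(nat \<Rightarrow> 'a::real_vector \<Rightarrow> real) \<Rightarrow> (real \<Rightarrow> 'a set) \<Rightarrow> bool" where
  "simple_mf p G \<longleftrightarrow> (\<exists>(n::nat) (A::nat \<Rightarrow> real set) C.
     (\<forall>j<n. A j \<in> sets lebesgue \<and> A j \<subseteq> {0..1} \<and> C j \<in> cb p) \<and>
     disjoint_family_on A {..<n} \<and>
     (\<forall>t\<in>{0..1}. (\<forall>j<n. t \<in> A j \<longrightarrow> G t = C j) \<and>
                   (t \<notin> (\<Union>j<n. A j) \<longrightarrow> G t = {0})))"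

definition bochner_measurable_mf :: "(nat \<Rightarrow> 'a::real_vector \<Rightarrow> real) \<Rightarrow> (real \<Rightarrow> 'a set) \<Rightarrow> bool" where
  "bochner_measurable_mf p \<Gamma> \<longleftrightarrow> (\<exists>G. (\<forall>n. simple_mf p (G n)) \<and>
     (AE t in lebesgue_on {0..1}. (\<lambda>n. H p (G n t) (\<Gamma> t)) \<longlonglongrightarrow> 0))"

definition totally_measurable_mf :: "(nat \<Rightarrow> 'a::real_vector \<Rightarrow> real) \<Rightarrow> (real \<Rightarrow> 'a set) \<Rightarrow> bool" where
  "totally_measurable_mf p \<Gamma> \<longleftrightarrow> (\<exists>G. (\<forall>n. simple_mf p (G n)) \<and>
     (\<forall>i. AE t in lebesgue_on {0..1}. (\<lambda>n. Hi p i (G n t) (\<Gamma> t)) \<longlonglongrightarrow> 0))"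

definition measurable_by_seminorm_mf :: "(nat \<Rightarrow> 'a::real_vector \<Rightarrow> real) \<Rightarrow> (real \<Rightarrow> 'a set) \<Rightarrow> bool" where
  "measurable_by_seminorm_mf p \<Gamma> \<longleftrightarrow> (\<forall>i. \<exists>G. (\<forall>n. simple_mf p (G n)) \<and>
     (AE t in lebesgue_on {0..1}. (\<lambda>n. Hi p i (G n t) (\<Gamma> t)) \<longlonglongrightarrow> 0))"

end

theory Submission
  imports Defs
begin

lemma sn_0: "is_seminorm q \<Longrightarrow> q 0 = 0"
  unfolding is_seminorm_def by (metis abs_zero mult_zero_left scale_zero_left)

lemma sn_minus: "is_seminorm q \<Longrightarrow> q (- x) = q x"
proof -
  assume "is_seminorm q"
  then have "q ((-1) *\<^sub>R x) = \<bar>-1\<bar> * q x" unfolding is_seminorm_def by blast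
  then show ?thesis by simp
qed

lemma sn_nonneg: "is_seminorm q \<Longrightarrow> 0 \<le> q x"
proof -
  assume a: "is_seminorm q"
  have "q (x + - x) \<le> q x + q (- x)" using a unfolding is_seminorm_def by blast
  then show ?thesis using sn_0[OF a] sn_minus[OF a, of x] by simp
qed

lemma sn_tri: "is_seminorm q \<Longrightarrow> q (a - c) \<le> q (a - b) + q (b - c)"
proof -
  assume "is_seminorm q"
  then have "q ((a - b) + (b - c)) \<le> q (a - b) + q (b - c)" unfolding is_seminorm_def by blast
  then show ?thesis by simp
qed

lemma sn_comm: "is_seminorm q \<Longrightarrow> q (a - b) = q (b - a)"
  using sn_minus[of q "a - b"] by simp

lemma sn_diff_le: "is_seminorm q \<Longrightarrow> q (a - b) \<le> q a + q b"
proof -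
  assume a: "is_seminorm q"
  have "q (a - b) \<le> q (a - 0) + q (0 - b)" by (rule sn_tri[OF a])
  then show ?thesis using sn_minus[OF a, of b] by simp
qed

lemma fs_sn: "frechet_seminorms p \<Longrightarrow> is_seminorm (p i)"
  unfolding frechet_seminorms_def by blast

lemma fs_mono: "frechet_seminorms p \<Longrightarrow> i \<le> j \<Longrightarrow> p i x \<le> p j x"
  unfolding frechet_seminorms_def
  by (rule lift_Suc_mono_le[of "\<lambda>i. p i x"]) auto

subsection \<open>Excess\<close>

lemma excess_le:
  fixes f :: "'b \<Rightarrow> 'b \<Rightarrow> real"
  assumes "A \<noteq> {}" "\<And>a b. 0 \<le> f a b" "\<And>a. a\<in>A \<Longrightarrow> \<exists>b\<in>B. f a b \<le> c"
  shows "excess f A B \<le> c"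
  unfolding excess_def
proof (rule cSUP_least[OF assms(1)])
  fix a assume "a\<in>A"
  then obtain b where b: "b\<in>B" "f a b \<le> c" using assms(3) by blast
  have "bdd_below (f a ` B)" using assms(2) by (meson bdd_belowI2)
  then show "(INF b\<in>B. f a b) \<le> c" using b by (meson cINF_lower2)
qed

lemma INF_ge0: "B \<noteq> {} \<Longrightarrow> (\<And>b. 0 \<le> (f::'b\<Rightarrow>'c\<Rightarrow>real) a b) \<Longrightarrow> 0 \<le> (INF b\<in>B. f a b)"
  by (rule cINF_greatest) auto

lemma INF_lt:
  fixes f :: "'b \<Rightarrow> 'b \<Rightarrow> real"
  assumes "(INF b\<in>B. f a b) < c" "B \<noteq> {}" "\<And>b. 0 \<le> f a b"
  shows "\<exists>b\<in>B. f a b < c"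
proof -
  have "bdd_below (f a ` B)" using assms(3) by (meson bdd_belowI2)
  then show ?thesis using assms(1) cINF_less_iff[OF assms(2) \<open>bdd_below (f a ` B)\<close>] by simp
qed

lemma excess_upper:
  fixes f :: "'b \<Rightarrow> 'b \<Rightarrow> real"
  assumes "a\<in>A" "B \<noteq> {}" "\<And>a b. 0 \<le> f a b" "\<And>a b. a\<in>A \<Longrightarrow> b\<in>B \<Longrightarrow> f a b \<le> M"
  shows "(INF b\<in>B. f a b) \<le> excess f A B"
  unfolding excess_def
proof (rule cSUP_upper[OF assms(1)])
  obtain b0 where b0: "b0 \<in> B" using assms(2) by blast
  have "(INF b\<in>B. f x b) \<le> M" if "x \<in> A" for x
  proof -
    have "bdd_below (f x ` B)" using assms(3) by (meson bdd_belowI2)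
    then show ?thesis using b0 assms(4)[OF that b0] by (meson cINF_lower2)
  qed
  then show "bdd_above ((\<lambda>a. INF b\<in>B. f a b) ` A)" by (meson bdd_aboveI2)
qed

lemma excess_nonneg:
  fixes f :: "'b \<Rightarrow> 'b \<Rightarrow> real"
  assumes "A \<noteq> {}" "B \<noteq> {}" "\<And>a b. 0 \<le> f a b" "\<And>a b. a\<in>A \<Longrightarrow> b\<in>B \<Longrightarrow> f a b \<le> M"
  shows "0 \<le> excess f A B"
proof -
  obtain a where a: "a \<in> A" using assms(1) by blast
  have "0 \<le> (INF b\<in>B. f a b)" using INF_ge0[of B f a] assms(2,3) by blast
  moreover have "(INF b\<in>B. f a b) \<le> excess f A B"
    by (rule excess_upper[of a A B f M]) (use a assms in auto)
  ultimately show ?thesis by linarith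
qed

definition bnd :: "(nat \<Rightarrow> 'a::real_vector \<Rightarrow> real) \<Rightarrow> 'a set \<Rightarrow> bool" where
  "bnd p A \<longleftrightarrow> A \<noteq> {} \<and> (\<forall>i. \<exists>M. \<forall>a\<in>A. p i a \<le> M)"

lemma bnd_pair:
  assumes "frechet_seminorms p" "bnd p A" "bnd p B"
  shows "\<exists>M. \<forall>a\<in>A. \<forall>b\<in>B. p i (a - b) \<le> M"
proof -
  obtain MA where MA: "\<forall>a\<in>A. p i a \<le> MA" using assms(2) unfolding bnd_def by blast
  obtain MB where MB: "\<forall>a\<in>B. p i a \<le> MB" using assms(3) unfolding bnd_def by blast
  have "\<forall>a\<in>A. \<forall>b\<in>B. p i (a - b) \<le> MA + MB"
  proof (intro ballI)
    fix a b assume "a \<in> A" "b \<in> B"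
    then have "p i a \<le> MA" "p i b \<le> MB" using MA MB by auto
    moreover have "p i (a - b) \<le> p i a + p i b" by (rule sn_diff_le[OF fs_sn[OF assms(1)]])
    ultimately show "p i (a - b) \<le> MA + MB" by linarith
  qed
  then show ?thesis by blast
qed

lemma sn_excess_upper:
  assumes "frechet_seminorms p" "bnd p A" "bnd p B" "a \<in> A"
  shows "(INF b\<in>B. p i (a - b)) \<le> excess (\<lambda>a b. p i (a - b)) A B"
proof -
  obtain M where "\<forall>a\<in>A. \<forall>b\<in>B. p i (a - b) \<le> M" using bnd_pair[OF assms(1-3)] by blast
  then show ?thesis
    using excess_upper[OF assms(4), of B "\<lambda>a b. p i (a - b)" M] assms sn_nonneg[OF fs_sn[OF assms(1)]]
    unfolding bnd_def by blast
qed

lemma sn_excess_nonneg: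
  assumes "frechet_seminorms p" "bnd p A" "bnd p B"
  shows "0 \<le> excess (\<lambda>a b. p i (a - b)) A B"
proof -
  obtain M where "\<forall>a\<in>A. \<forall>b\<in>B. p i (a - b) \<le> M" using bnd_pair[OF assms(1-3)] by blast
  then show ?thesis
    using excess_nonneg[of A B "\<lambda>a b. p i (a - b)" M] assms sn_nonneg[OF fs_sn[OF assms(1)]]
    unfolding bnd_def by blast
qed

lemma Hi_nonneg:
  assumes "frechet_seminorms p" "bnd p A" "bnd p B"
  shows "0 \<le> Hi p i A B"
  using sn_excess_nonneg[OF assms] unfolding hausdorff_def by (simp add: max.coboundedI1)

lemma sn_excess_tri:
  assumes fs: "frechet_seminorms p" and A: "bnd p A" and B: "bnd p B" and C: "bnd p C"
  shows "excess (\<lambda>a b. p i (a - b)) A C \<le> excess (\<lambda>a b. p i (a - b)) A B + excess (\<lambda>a b. p i (a - b)) B C"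
proof -
  let ?q = "p i"
  let ?E = "excess (\<lambda>a b. p i (a - b))"
  have sn: "is_seminorm ?q" by (rule fs_sn[OF fs])
  have Cne: "C \<noteq> {}" and Bne: "B \<noteq> {}" and Ane: "A \<noteq> {}" using A B C unfolding bnd_def by auto
  have key: "(INF c\<in>C. ?q (a - c)) \<le> ?E A B + ?E B C" if a: "a \<in> A" for a
  proof -
    have "(INF c\<in>C. ?q (a - c)) - ?E B C \<le> ?q (a - b)" if b: "b \<in> B" for b
    proof -
      have "(INF c\<in>C. ?q (a - c)) - ?q (a - b) \<le> (INF c\<in>C. ?q (b - c))"
      proof (rule cINF_greatest[OF Cne])
        fix c assume c: "c \<in> C"
        have "bdd_below ((\<lambda>c. ?q (a - c)) ` C)" using sn_nonneg[OF sn] by (meson bdd_belowI2)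
        then have "(INF c\<in>C. ?q (a - c)) \<le> ?q (a - c)" using c by (meson cINF_lower)
        then show "(INF c\<in>C. ?q (a - c)) - ?q (a - b) \<le> ?q (b - c)" using sn_tri[OF sn, of a c b] by linarith
      qed
      moreover have "(INF c\<in>C. ?q (b - c)) \<le> ?E B C" by (rule sn_excess_upper[OF fs B C b])
      ultimately show ?thesis by linarith
    qed
    then have "(INF c\<in>C. ?q (a - c)) - ?E B C \<le> (INF b\<in>B. ?q (a - b))"
      by (intro cINF_greatest[OF Bne]) auto
    moreover have "(INF b\<in>B. ?q (a - b)) \<le> ?E A B" by (rule sn_excess_upper[OF fs A B a])
    ultimately show ?thesis by linarith
  qed
  show ?thesis unfolding excess_def[of _ A C]
    by (rule cSUP_least[OF Ane]) (use key in \<open>simp add: excess_def\<close>)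
qed

lemma Hi_tri:
  assumes fs: "frechet_seminorms p" and A: "bnd p A" and B: "bnd p B" and C: "bnd p C"
  shows "Hi p i A C \<le> Hi p i A B + Hi p i B C"
  using sn_excess_tri[OF fs A B C, of i] sn_excess_tri[OF fs C B A, of i]
  unfolding hausdorff_def by linarith

lemma Hi_sym: "Hi p i A B = Hi p i B A"
  unfolding hausdorff_def by simp

lemma Hi_mono:
  assumes fs: "frechet_seminorms p" and A: "bnd p A" and B: "bnd p B" and ij: "i \<le> j"
  shows "Hi p i A B \<le> Hi p j A B"
proof -
  have ex: "excess (\<lambda>a b. p i (a - b)) X Y \<le> excess (\<lambda>a b. p j (a - b)) X Y"
    if X: "bnd p X" and Y: "bnd p Y" for X Y
    unfolding excess_def[of "\<lambda>a b. p i (a - b)" X Y]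
  proof (rule cSUP_least)
    show "X \<noteq> {}" using X unfolding bnd_def by auto
    fix a assume a: "a \<in> X"
    have "(INF b\<in>Y. p i (a - b)) \<le> (INF b\<in>Y. p j (a - b))"
    proof (rule cINF_greatest)
      show "Y \<noteq> {}" using Y unfolding bnd_def by auto
      fix b assume b: "b \<in> Y"
      have "bdd_below ((\<lambda>b. p i (a - b)) ` Y)" using sn_nonneg[OF fs_sn[OF fs]] by (meson bdd_belowI2)
      then have "(INF b\<in>Y. p i (a - b)) \<le> p i (a - b)" using b by (meson cINF_lower)
      then show "(INF b\<in>Y. p i (a - b)) \<le> p j (a - b)" using fs_mono[OF fs ij] by (meson order_trans)
    qed
    also have "\<dots> \<le> excess (\<lambda>a b. p j (a - b)) X Y" by (rule sn_excess_upper[OF fs X Y a])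
    finally show "(INF b\<in>Y. p i (a - b)) \<le> excess (\<lambda>a b. p j (a - b)) X Y" .
  qed
  show ?thesis using ex[OF A B] ex[OF B A] unfolding hausdorff_def by linarith
qed


subsection \<open>fdist\<close>

lemma half_sums: "(\<lambda>i. (1/2::real) ^ Suc i) sums 1"
proof -
  have "(\<lambda>i. (1/2::real) * (1/2) ^ i) sums ((1/2) * (1 / (1 - 1/2)))"
    by (rule sums_mult) (rule geometric_sums, simp)
  then show ?thesis by simp
qed

lemma phi_bounds: "0 \<le> (u::real) \<Longrightarrow> 0 \<le> u / (1 + u) \<and> u / (1 + u) \<le> 1 \<and> u / (1 + u) \<le> u"
  by (auto simp: field_simps)

lemma fd_term_nonneg: "frechet_seminorms p \<Longrightarrow> 0 \<le> (1/2::real) ^ Suc i * (p i z / (1 + p i z))"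
  using phi_bounds[OF sn_nonneg[OF fs_sn], of p i z] by simp

lemma fd_term_le: assumes fs: "frechet_seminorms p" shows "(1/2::real) ^ Suc i * (p i z / (1 + p i z)) \<le> (1/2) ^ Suc i"
proof -
  have "p i z / (1 + p i z) \<le> 1" using phi_bounds[OF sn_nonneg[OF fs_sn[OF fs]], of i z] by blast
  then show ?thesis by (intro mult_left_le) auto
qed

lemma fd_summable: assumes fs: "frechet_seminorms p" shows "summable (\<lambda>i. (1/2::real) ^ Suc i * (p i z / (1 + p i z)))"
proof (rule summable_comparison_test[OF _ sums_summable[OF half_sums]])
  have "norm ((1/2::real) ^ Suc i * (p i z / (1 + p i z))) \<le> (1/2) ^ Suc i" for i
    using fd_term_nonneg[OF fs, of i z] fd_term_le[OF fs, of i z] by (simp only: real_norm_def abs_of_nonneg)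
  then show "\<exists>N. \<forall>n\<ge>N. norm ((1/2::real) ^ Suc n * (p n z / (1 + p n z))) \<le> (1/2) ^ Suc n" by blast
qed

lemma fd_nonneg: "frechet_seminorms p \<Longrightarrow> 0 \<le> fdist p x y"
  unfolding fdist_def by (intro suminf_nonneg fd_summable fd_term_nonneg)

lemma fd_le1: assumes fs: "frechet_seminorms p" shows "fdist p x y \<le> 1"
proof -
  have "fdist p x y \<le> (\<Sum>i. (1/2::real) ^ Suc i)"
    unfolding fdist_def
    by (rule suminf_le[OF fd_term_le[OF fs] fd_summable[OF fs] sums_summable[OF half_sums]])
  then show ?thesis using sums_unique[OF half_sums] by simp
qed

lemma fd_ge_term: assumes fs: "frechet_seminorms p" shows "(1/2::real) ^ Suc i * (p i (x - y) / (1 + p i (x - y))) \<le> fdist p x y"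
proof -
  have "sum (\<lambda>i. (1/2::real) ^ Suc i * (p i (x - y) / (1 + p i (x - y)))) {i}
     \<le> (\<Sum>i. (1/2::real) ^ Suc i * (p i (x - y) / (1 + p i (x - y))))"
    by (rule sum_le_suminf[OF fd_summable[OF fs]]) (use fd_term_nonneg[OF fs] in auto)
  then show ?thesis unfolding fdist_def by simp
qed

lemma fd_upper:
  assumes fs: "frechet_seminorms p"
  shows "fdist p x y \<le> p N (x - y) + (1/2) ^ N"
proof -
  define u where "u = p N (x - y)"
  define h where "h i = (if N \<le> i then (1/2::real) ^ Suc i else 0)" for i
  have u0: "0 \<le> u" unfolding u_def by (rule sn_nonneg[OF fs_sn[OF fs]])
  have "(\<lambda>i. h (i + N)) sums ((1/2)^N * 1)"
  proof -
    have eq: "(\<lambda>i. h (i + N)) = (\<lambda>i. (1/2::real)^N * (1/2) ^ Suc i)"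
      unfolding h_def by (rule ext) (simp add: power_add)
    show ?thesis unfolding eq by (rule sums_mult[OF half_sums])
  qed
  moreover have "(\<Sum>i<N. h i) = 0" unfolding h_def by simp
  ultimately have hs: "h sums ((1/2)^N)" using sums_iff_shift[of h N] by simp
  have us: "(\<lambda>i. u * (1/2::real) ^ Suc i) sums (u * 1)" by (rule sums_mult[OF half_sums])
  have gs: "(\<lambda>i. u * (1/2::real) ^ Suc i + h i) sums (u * 1 + (1/2)^N)" by (rule sums_add[OF us hs])
  have le: "(1/2::real) ^ Suc i * (p i (x - y) / (1 + p i (x - y))) \<le> u * (1/2::real) ^ Suc i + h i" for i
  proof (cases "N \<le> i")
    case True
    have "0 \<le> u * (1/2::real) ^ Suc i" using u0 by simp
    moreover have "h i = (1/2::real) ^ Suc i" using True unfolding h_def by simp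
    ultimately show ?thesis using fd_term_le[OF fs, of i "x - y"] by linarith
  next
    case False
    have pn: "0 \<le> p i (x - y)" by (rule sn_nonneg[OF fs_sn[OF fs]])
    have "p i (x - y) / (1 + p i (x - y)) \<le> p i (x - y)" using phi_bounds[OF pn] by simp
    also have "\<dots> \<le> u" unfolding u_def using fs_mono[OF fs, of i N] False by simp
    finally have "(1/2::real) ^ Suc i * (p i (x - y) / (1 + p i (x - y))) \<le> (1/2::real) ^ Suc i * u"
      by (intro mult_left_mono) auto
    then show ?thesis using False unfolding h_def by (simp add: mult.commute)
  qed
  have "fdist p x y \<le> (\<Sum>i. u * (1/2::real) ^ Suc i + h i)"
    unfolding fdist_def by (rule suminf_le[OF le fd_summable[OF fs] sums_summable[OF gs]])
  also have "\<dots> = u + (1/2)^N" using sums_unique[OF gs] by simp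
  finally show ?thesis unfolding u_def .
qed

lemma fd_excess_upper:
  assumes fs: "frechet_seminorms p" and "a \<in> A" "B \<noteq> {}"
  shows "(INF b\<in>B. fdist p a b) \<le> excess (fdist p) A B"
  by (rule excess_upper[of a A B "fdist p" 1]) (use assms fd_nonneg[OF fs] fd_le1[OF fs] in auto)

lemma H_nonneg:
  assumes fs: "frechet_seminorms p" and "bnd p A" "bnd p B"
  shows "0 \<le> H p A B"
proof -
  have "0 \<le> excess (fdist p) A B"
    by (rule excess_nonneg[of A B "fdist p" 1]) (use assms fd_nonneg[OF fs] fd_le1[OF fs] in \<open>auto simp: bnd_def\<close>)
  then show ?thesis unfolding hausdorff_def by (simp add: max.coboundedI1)
qed

lemma L1_excess:
  assumes fs: "frechet_seminorms p" and A: "bnd p A" and B: "bnd p B"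
    and e: "0 < e" "e \<le> 1/2" and lt: "excess (fdist p) A B < e * (1/2) ^ Suc i"
  shows "excess (\<lambda>a b. p i (a - b)) A B \<le> 2 * e"
proof (rule excess_le)
  show "A \<noteq> {}" using A by (simp add: bnd_def)
  show "0 \<le> p i (a - b)" for a b by (rule sn_nonneg[OF fs_sn[OF fs]])
  fix a assume a: "a \<in> A"
  have Bne: "B \<noteq> {}" using B by (simp add: bnd_def)
  have "(INF b\<in>B. fdist p a b) < e * (1/2) ^ Suc i"
    using fd_excess_upper[OF fs a Bne] lt by linarith
  then obtain b where b: "b \<in> B" "fdist p a b < e * (1/2) ^ Suc i"
    using INF_lt[of "fdist p" a B] Bne fd_nonneg[OF fs] by blast
  define u where "u = p i (a - b)"
  have u0: "0 \<le> u" unfolding u_def by (rule sn_nonneg[OF fs_sn[OF fs]])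
  have "(1/2::real) ^ Suc i * (u / (1 + u)) \<le> fdist p a b"
    using fd_ge_term[OF fs, of i a b] unfolding u_def .
  then have "(1/2::real) ^ Suc i * (u / (1 + u)) < (1/2) ^ Suc i * e"
    using b(2) by (metis mult.commute order_le_less_trans)
  moreover have pos: "0 < (1/2::real) ^ Suc i" by simp
  ultimately have "u / (1 + u) < e" using mult_less_cancel_left_pos by blast
  then have "u < e * (1 + u)" using u0 by (simp add: field_simps)
  moreover have "e * u \<le> (1/2) * u" by (rule mult_right_mono[OF e(2) u0])
  ultimately have "u \<le> 2 * e" by (simp add: algebra_simps)
  then show "\<exists>b\<in>B. p i (a - b) \<le> 2 * e" using b(1) unfolding u_def by blast
qed

lemma L1:
  assumes fs: "frechet_seminorms p" and A: "bnd p A" and B: "bnd p B"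
    and e: "0 < e" "e \<le> 1/2" and lt: "H p A B < e * (1/2) ^ Suc i"
  shows "Hi p i A B \<le> 2 * e"
  using L1_excess[OF fs A B e] L1_excess[OF fs B A e] lt unfolding hausdorff_def by simp

lemma L2_excess:
  assumes fs: "frechet_seminorms p" and A: "bnd p A" and B: "bnd p B"
    and lt: "excess (\<lambda>a b. p N (a - b)) A B < d"
  shows "excess (fdist p) A B \<le> d + (1/2) ^ N"
proof (rule excess_le)
  show "A \<noteq> {}" using A by (simp add: bnd_def)
  show "0 \<le> fdist p a b" for a b by (rule fd_nonneg[OF fs])
  fix a assume a: "a \<in> A"
  have Bne: "B \<noteq> {}" using B by (simp add: bnd_def)
  have "(INF b\<in>B. p N (a - b)) < d"
    using sn_excess_upper[OF fs A B a, of N] lt by linarith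
  then obtain b where b: "b \<in> B" "p N (a - b) < d"
    using INF_lt[of "\<lambda>a b. p N (a - b)" a B] Bne sn_nonneg[OF fs_sn[OF fs]] by blast
  have "fdist p a b \<le> d + (1/2) ^ N" using fd_upper[OF fs, of a b N] b(2) by linarith
  then show "\<exists>b\<in>B. fdist p a b \<le> d + (1/2) ^ N" using b(1) by blast
qed

lemma L2:
  assumes fs: "frechet_seminorms p" and A: "bnd p A" and B: "bnd p B"
    and lt: "Hi p N A B < d"
  shows "H p A B \<le> d + (1/2) ^ N"
  using L2_excess[OF fs A B] L2_excess[OF fs B A] lt unfolding hausdorff_def by simp

lemma conv1:
  assumes fs: "frechet_seminorms p" and A: "\<And>n. bnd p (A n)" and B: "bnd p B"
    and lim: "(\<lambda>n. H p (A n) B) \<longlonglongrightarrow> 0"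
  shows "(\<lambda>n. Hi p i (A n) B) \<longlonglongrightarrow> 0"
proof (rule LIMSEQ_I)
  fix r :: real assume r: "0 < r"
  define e where "e = min (1/2) (r/4)"
  have e: "0 < e" "e \<le> 1/2" "2 * e < r" using r unfolding e_def by auto
  have "0 < e * (1/2::real) ^ Suc i" using e by simp
  from LIMSEQ_D[OF lim this] obtain no where no: "\<forall>n\<ge>no. norm (H p (A n) B - 0) < e * (1/2) ^ Suc i" by blast
  have "norm (Hi p i (A n) B - 0) < r" if "n \<ge> no" for n
  proof -
    have "H p (A n) B < e * (1/2) ^ Suc i" using no that by auto
    then have "Hi p i (A n) B \<le> 2 * e" by (rule L1[OF fs A B e(1,2)])
    moreover have "0 \<le> Hi p i (A n) B" by (rule Hi_nonneg[OF fs A B])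
    ultimately show ?thesis using e by simp
  qed
  then show "\<exists>no. \<forall>n\<ge>no. norm (Hi p i (A n) B - 0) < r" by blast
qed

lemma conv2:
  assumes fs: "frechet_seminorms p" and A: "\<And>n. bnd p (A n)" and B: "bnd p B"
    and lim: "\<And>i. (\<lambda>n. Hi p i (A n) B) \<longlonglongrightarrow> 0"
  shows "(\<lambda>n. H p (A n) B) \<longlonglongrightarrow> 0"
proof (rule LIMSEQ_I)
  fix r :: real assume r: "0 < r"
  have "(\<lambda>N. (1/2::real) ^ N) \<longlonglongrightarrow> 0" by (rule LIMSEQ_realpow_zero) auto
  from LIMSEQ_D[OF this, of "r/2"] r obtain N where N: "(1/2::real) ^ N < r/2" by auto
  from LIMSEQ_D[OF lim[of N], of "r/4"] r obtain no where no: "\<forall>n\<ge>no. norm (Hi p N (A n) B - 0) < r/4" by auto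
  have "norm (H p (A n) B - 0) < r" if "n \<ge> no" for n
  proof -
    have "Hi p N (A n) B < r/4" using no that by auto
    then have "H p (A n) B \<le> r/4 + (1/2) ^ N" by (rule L2[OF fs A B])
    moreover have "0 \<le> H p (A n) B" by (rule H_nonneg[OF fs A B])
    ultimately show ?thesis using N by simp
  qed
  then show "\<exists>no. \<forall>n\<ge>no. norm (H p (A n) B - 0) < r" by blast
qed


subsection \<open>Simple multifunctions\<close>

lemma cb_bnd: "A \<in> cb p \<Longrightarrow> bnd p A"
  unfolding cb_def bnd_def by simp

lemma smf_E:
  assumes "simple_mf p G"
  obtains n :: nat and A :: "nat \<Rightarrow> real set" and C where
    "\<forall>j<n. A j \<in> sets lebesgue \<and> A j \<subseteq> {0..1} \<and> C j \<in> cb p"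
    "\<forall>t\<in>{0..1}. (\<forall>j<n. t \<in> A j \<longrightarrow> G t = C j) \<and> (t \<notin> (\<Union>j<n. A j) \<longrightarrow> G t = {0})"
  using assms unfolding simple_mf_def by (elim exE conjE) (rule that; assumption)

lemma smf_bnd:
  assumes fs: "frechet_seminorms p" and G: "simple_mf p G" and t: "t \<in> {0..1}"
  shows "bnd p (G t)"
proof -
  obtain n :: nat and A :: "nat \<Rightarrow> real set" and C where
    h1: "\<forall>j<n. A j \<in> sets lebesgue \<and> A j \<subseteq> {0..1} \<and> C j \<in> cb p" and
    h3: "\<forall>t\<in>{0..1}. (\<forall>j<n. t \<in> A j \<longrightarrow> G t = C j) \<and> (t \<notin> (\<Union>j<n. A j) \<longrightarrow> G t = {0})"
    by (rule smf_E[OF G])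
  show ?thesis
  proof (cases "t \<in> (\<Union>j<n. A j)")
    case True
    then obtain j where j: "j < n" "t \<in> A j" by blast
    have "G t = C j" using conjunct1[OF bspec[OF h3 t], rule_format, OF j] .
    moreover have "C j \<in> cb p" using h1 j by blast
    ultimately show ?thesis using cb_bnd by simp
  next
    case False
    then have "G t = {0}" using conjunct2[OF bspec[OF h3 t]] by blast
    then show ?thesis unfolding bnd_def using sn_0[OF fs_sn[OF fs]] by auto
  qed
qed

lemma smf_sf:
  assumes G: "simple_mf p G"
  shows "simple_function (lebesgue_on {0..1}) G"
proof -
  obtain n :: nat and A :: "nat \<Rightarrow> real set" and C where
    h1: "\<forall>j<n. A j \<in> sets lebesgue \<and> A j \<subseteq> {0..1} \<and> C j \<in> cb p" and
    h3: "\<forall>t\<in>{0..1}. (\<forall>j<n. t \<in> A j \<longrightarrow> G t = C j) \<and> (t \<notin> (\<Union>j<n. A j) \<longrightarrow> G t = {0})"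
    by (rule smf_E[OF G])
  have I: "{0..1::real} \<in> sets lebesgue" by simp
  have hA: "G t = C j" if "t \<in> {0..1}" "j < n" "t \<in> A j" for t j
    using conjunct1[OF bspec[OF h3 that(1)], rule_format, OF that(2,3)] .
  have hN: "G t = {0}" if "t \<in> {0..1}" "t \<notin> (\<Union>j<n. A j)" for t
    using conjunct2[OF bspec[OF h3 that(1)], rule_format, OF that(2)] .
  have fin: "G ` {0..1} \<subseteq> insert {0} (C ` {..<n})"
  proof
    fix X assume "X \<in> G ` {0..1}"
    then obtain t where t: "t \<in> {0..1}" "X = G t" by blast
    show "X \<in> insert {0} (C ` {..<n})"
    proof (cases "t \<in> (\<Union>j<n. A j)")
      case True
      then obtain j where "j < n" "t \<in> A j" by blast
      then show ?thesis using hA[OF t(1)] t(2) by blast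
    next
      case False
      then show ?thesis using hN[OF t(1)] t(2) by blast
    qed
  qed
  define S where "S X = (\<Union>j\<in>{j. j < n \<and> C j = X}. A j) \<union> (if X = {0} then {0..1} - (\<Union>j<n. A j) else {})" for X
  have eq: "G -` {X} \<inter> {0..1} = S X" for X
  proof (intro equalityI subsetI)
    fix t assume "t \<in> G -` {X} \<inter> {0..1}"
    then have t: "t \<in> {0..1}" "G t = X" by auto
    show "t \<in> S X"
    proof (cases "t \<in> (\<Union>j<n. A j)")
      case True
      then obtain j where j: "j < n" "t \<in> A j" by blast
      then have "C j = X" using hA[OF t(1) j] t(2) by simp
      then show ?thesis unfolding S_def using j by blast
    next
      case False
      then have "X = {0}" using hN[OF t(1)] t(2) by simp
      then show ?thesis unfolding S_def using False t(1) by simp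
    qed
  next
    fix t assume t: "t \<in> S X"
    show "t \<in> G -` {X} \<inter> {0..1}"
    proof (cases "t \<in> (\<Union>j\<in>{j. j < n \<and> C j = X}. A j)")
      case True
      then obtain j where j: "j < n" "C j = X" "t \<in> A j" by blast
      then have t01: "t \<in> {0..1}" using h1 by blast
      then have "G t = X" using hA[OF t01 j(1) j(3)] j(2) by simp
      then show ?thesis using t01 by simp
    next
      case False
      then have "X = {0}" "t \<in> {0..1}" "t \<notin> (\<Union>j<n. A j)" using t unfolding S_def by (auto split: if_splits)
      then show ?thesis using hN by simp
    qed
  qed
  have Sm: "S X \<in> sets (lebesgue_on {0..1})" for X
  proof -
    have fj: "finite {j. j < n \<and> C j = X}" by simp
    have "(\<Union>j\<in>{j. j < n \<and> C j = X}. A j) \<in> sets lebesgue"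
      by (rule sets.finite_UN[OF fj]) (use h1 in blast)
    moreover have "(\<Union>j<n. A j) \<in> sets lebesgue"
      by (rule sets.finite_UN) (use h1 in auto)
    ultimately have "S X \<in> sets lebesgue" unfolding S_def using I
      by (cases "X = {0}") (simp_all add: sets.Diff sets.Un)
    moreover have "S X \<subseteq> {0..1}" unfolding S_def using h1 by (auto split: if_splits)
    moreover have I': "{0..1::real} \<inter> space lebesgue \<in> sets lebesgue" using I by simp
    ultimately show ?thesis by (subst sets_restrict_space_iff[OF I']) (intro conjI)
  qed
  have "finite (G ` {0..1})" by (rule finite_subset[OF fin]) simp
  moreover have "G -` {X} \<inter> space (lebesgue_on {0..1}) \<in> sets (lebesgue_on {0..1})" for X
    using eq Sm by simp
  ultimately show ?thesis unfolding simple_function_def by simp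
qed

lemma smf_Hi_meas:
  assumes "simple_mf p G" "simple_mf p G'"
  shows "(\<lambda>t. Hi p k (G t) (G' t)) \<in> borel_measurable (lebesgue_on {0..1})"
  by (rule borel_measurable_simple_function[OF simple_function_compose2[OF smf_sf[OF assms(1)] smf_sf[OF assms(2)]]])


subsection \<open>Diagonal argument\<close>

lemma diag:
  fixes M :: "'b measure" and f :: "nat \<Rightarrow> nat \<Rightarrow> nat \<Rightarrow> 'b \<Rightarrow> real" and g :: "nat \<Rightarrow> nat \<Rightarrow> 'b \<Rightarrow> real"
  assumes fm: "finite_measure M"
    and meas: "\<And>k m m'. f k m m' \<in> borel_measurable M"
    and tri1: "\<And>k m m' t. t \<in> space M \<Longrightarrow> f k m m' t \<le> g k m t + g k m' t"
    and tri2: "\<And>k n m t. t \<in> space M \<Longrightarrow> g k n t \<le> f k n m t + g k m t"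
    and conv: "\<And>k. AE t in M. (\<lambda>m. g k m t) \<longlonglongrightarrow> 0"
  shows "\<exists>n. AE t in M. eventually (\<lambda>k. g k (n k) t \<le> inverse (real (Suc k))) sequentially"
proof -
  interpret finite_measure M by (rule fm)
  define c where "c k = inverse (real (Suc k))" for k
  have c0: "0 < c k" for k unfolding c_def by simp
  define F where "F k n = {t \<in> space M. \<forall>m. n \<le> m \<longrightarrow> (\<forall>m'. n \<le> m' \<longrightarrow> f k m m' t \<le> c k)}" for k n
  define D where "D k n = space M - F k n" for k n
  have [measurable]: "f k m m' \<in> borel_measurable M" for k m m' by (rule meas)
  have Fm: "F k n \<in> sets M" for k n unfolding F_def by measurable
  have Dm: "D k n \<in> sets M" for k n unfolding D_def using Fm by auto
  have Finc: "F k m \<subseteq> F k n" if "m \<le> n" for k m n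
  proof
    fix t assume "t \<in> F k m"
    then show "t \<in> F k n" unfolding F_def using that le_trans by blast
  qed
  have Ddec: "decseq (D k)" for k
    unfolding decseq_def D_def using Finc by blast
  have Dnull: "measure M (\<Inter>n. D k n) = 0" for k
  proof -
    have "AE t in M. t \<notin> (\<Inter>n. D k n)"
      using conv[of k]
    proof eventually_elim
      case (elim t)
      show ?case
      proof
        assume tD: "t \<in> (\<Inter>n. D k n)"
        have "0 < c k / 2" using c0 by simp
        from LIMSEQ_D[OF elim this] obtain N where N: "\<forall>m\<ge>N. norm (g k m t - 0) < c k / 2" by blast
        have tS: "t \<in> space M" using tD unfolding D_def by auto
        have "t \<in> F k N" unfolding F_def
        proof (intro CollectI conjI allI impI tS)
          fix m m' assume "N \<le> m" "N \<le> m'"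
          then have "g k m t < c k / 2" "g k m' t < c k / 2" using N by auto
          then show "f k m m' t \<le> c k" using tri1[OF tS, of k m m'] by linarith
        qed
        then show False using tD unfolding D_def by auto
      qed
    qed
    moreover have "(\<Inter>n. D k n) \<in> sets M" using Dm by auto
    moreover have "{x \<in> space M. \<not> x \<notin> (\<Inter>n. D k n)} = (\<Inter>n. D k n)" unfolding D_def by auto
    ultimately have "emeasure M (\<Inter>n. D k n) = 0" using AE_iff_measurable[of "\<Inter>n. D k n" M "\<lambda>x. x \<notin> (\<Inter>n. D k n)"] by simp
    then show ?thesis by (simp add: measure_def)
  qed
  have lim: "(\<lambda>n. measure M (D k n)) \<longlonglongrightarrow> 0" for k
    using finite_Lim_measure_decseq[of "D k"] Dm Ddec Dnull by auto
  have ex: "\<exists>n. measure M (D k n) < (1/2) ^ k" for k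
  proof -
    have "0 < (1/2::real) ^ k" by simp
    from LIMSEQ_D[OF lim this] obtain no where "\<forall>n\<ge>no. norm (measure M (D k n) - 0) < (1/2) ^ k" by blast
    then show ?thesis by auto
  qed
  obtain n where n: "\<forall>k. measure M (D k (n k)) < (1/2) ^ k" using choice[of "\<lambda>k n. measure M (D k n) < (1/2) ^ k"] ex by blast
  have summ: "summable (\<lambda>k. measure M (D k (n k)))"
  proof (rule summable_comparison_test)
    have "norm (measure M (D k (n k))) \<le> (1/2::real) ^ k" for k
      using n[rule_format, of k] measure_nonneg[of M "D k (n k)"] by simp
    then show "\<exists>N. \<forall>k\<ge>N. norm (measure M (D k (n k))) \<le> (1/2::real) ^ k" by blast
    show "summable (\<lambda>k. (1/2::real) ^ k)" by (rule summable_geometric) simp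
  qed
  have bc: "AE t in M. eventually (\<lambda>k. t \<in> space M - D k (n k)) sequentially"
    by (rule borel_cantelli_AE1[OF Dm]) (use summ in \<open>auto simp: less_top[symmetric]\<close>)
  have convall: "AE t in M. \<forall>k. (\<lambda>m. g k m t) \<longlonglongrightarrow> 0"
    using conv by (simp add: AE_all_countable)
  have "AE t in M. eventually (\<lambda>k. g k (n k) t \<le> c k) sequentially"
    using bc convall AE_space
  proof eventually_elim
    case (elim t)
    show ?case using elim(1)
    proof (rule eventually_mono)
      fix k assume "t \<in> space M - D k (n k)"
      then have tF: "t \<in> F k (n k)" unfolding D_def by auto
      have tS: "t \<in> space M" using elim(3) .
      have "g k (n k) t - c k \<le> 0"
      proof (rule LIMSEQ_le_const[OF elim(2)[rule_format, of k]])
        show "\<exists>N. \<forall>m\<ge>N. g k (n k) t - c k \<le> g k m t"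
        proof (intro exI allI impI)
          fix m assume "n k \<le> m"
          then have "f k (n k) m t \<le> c k" using tF unfolding F_def by auto
          then show "g k (n k) t - c k \<le> g k m t" using tri2[OF tS, of k "n k" m] by linarith
        qed
      qed
      then show "g k (n k) t \<le> c k" by linarith
    qed
  qed
  then have "AE t in M. eventually (\<lambda>k. g k (n k) t \<le> inverse (real (Suc k))) sequentially"
    unfolding c_def .
  then show ?thesis by (rule exI[of _ n])
qed


theorem theorem3p5:
  fixes p :: "nat \<Rightarrow> 'a::real_vector \<Rightarrow> real" and \<Gamma> :: "real \<Rightarrow> 'a set"
  assumes "frechet_seminorms p"
    and "\<forall>t\<in>{0..1}. \<Gamma> t \<in> cb p"
  shows "(bochner_measurable_mf p \<Gamma> \<longleftrightarrow> totally_measurable_mf p \<Gamma>) \<and>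
         (totally_measurable_mf p \<Gamma> \<longleftrightarrow> measurable_by_seminorm_mf p \<Gamma>)"
proof -
  note fs = assms(1)
  have Gb: "bnd p (\<Gamma> t)" if "t \<in> {0..1}" for t by (rule cb_bnd) (rule bspec[OF assms(2) that])
  have fm: "finite_measure (lebesgue_on {0..1::real})"
    by (rule finite_measure_lebesgue_on) (metis cbox_interval lmeasurable_cbox)
  have b2t: "totally_measurable_mf p \<Gamma>" if hyp: "bochner_measurable_mf p \<Gamma>"
  proof -
    obtain G where G: "\<forall>n. simple_mf p (G n)"
      "AE t in lebesgue_on {0..1}. (\<lambda>n. H p (G n t) (\<Gamma> t)) \<longlonglongrightarrow> 0"
      using hyp unfolding bochner_measurable_mf_def by blast
    have "AE t in lebesgue_on {0..1}. (\<lambda>n. Hi p i (G n t) (\<Gamma> t)) \<longlonglongrightarrow> 0" for i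
      using G(2) AE_space
    proof eventually_elim
      case (elim t)
      then have t: "t \<in> {0..1}" by simp
      show ?case by (rule conv1[OF fs smf_bnd[OF fs G(1)[rule_format] t] Gb[OF t] elim(1)])
    qed
    then show ?thesis unfolding totally_measurable_mf_def using G(1) by blast
  qed
  have t2b: "bochner_measurable_mf p \<Gamma>" if hyp: "totally_measurable_mf p \<Gamma>"
  proof -
    obtain G where G: "\<forall>n. simple_mf p (G n)"
      "\<forall>i. AE t in lebesgue_on {0..1}. (\<lambda>n. Hi p i (G n t) (\<Gamma> t)) \<longlonglongrightarrow> 0"
      using hyp unfolding totally_measurable_mf_def by blast
    have "AE t in lebesgue_on {0..1}. \<forall>i. (\<lambda>n. Hi p i (G n t) (\<Gamma> t)) \<longlonglongrightarrow> 0"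
      using G(2) by (simp add: AE_all_countable)
    then have "AE t in lebesgue_on {0..1}. (\<lambda>n. H p (G n t) (\<Gamma> t)) \<longlonglongrightarrow> 0"
      using AE_space
    proof eventually_elim
      case (elim t)
      then have t: "t \<in> {0..1}" by simp
      show ?case by (rule conv2[OF fs smf_bnd[OF fs G(1)[rule_format] t] Gb[OF t] elim(1)[rule_format]])
    qed
    then show ?thesis unfolding bochner_measurable_mf_def using G(1) by blast
  qed
  have t2s: "measurable_by_seminorm_mf p \<Gamma>" if "totally_measurable_mf p \<Gamma>"
    using that unfolding totally_measurable_mf_def measurable_by_seminorm_mf_def by blast
  have s2t: "totally_measurable_mf p \<Gamma>" if hyp: "measurable_by_seminorm_mf p \<Gamma>"
  proof -
    have "\<forall>i. \<exists>G. (\<forall>n. simple_mf p (G n)) \<and>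
       (AE t in lebesgue_on {0..1}. (\<lambda>n. Hi p i (G n t) (\<Gamma> t)) \<longlonglongrightarrow> 0)"
      using hyp unfolding measurable_by_seminorm_mf_def .
    then obtain GG where GGall: "\<forall>k. (\<forall>n. simple_mf p (GG k n)) \<and>
       (AE t in lebesgue_on {0..1}. (\<lambda>n. Hi p k (GG k n t) (\<Gamma> t)) \<longlonglongrightarrow> 0)"
      by (rule choice[THEN exE])
    have GG: "\<And>k n. simple_mf p (GG k n)"
      "\<And>k. AE t in lebesgue_on {0..1}. (\<lambda>n. Hi p k (GG k n t) (\<Gamma> t)) \<longlonglongrightarrow> 0"
      using GGall by auto
    have bG: "bnd p (GG k n t)" if "t \<in> {0..1}" for k n t by (rule smf_bnd[OF fs GG(1) that])
    have "\<exists>n. AE t in lebesgue_on {0..1}. eventually (\<lambda>k. Hi p k (GG k (n k) t) (\<Gamma> t) \<le> inverse (real (Suc k))) sequentially"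
    proof (rule diag[OF fm, where f = "\<lambda>k m m' t. Hi p k (GG k m t) (GG k m' t)"])
      show "(\<lambda>t. Hi p k (GG k m t) (GG k m' t)) \<in> borel_measurable (lebesgue_on {0..1})" for k m m'
        by (rule smf_Hi_meas[OF GG(1) GG(1)])
      show "Hi p k (GG k m t) (GG k m' t) \<le> Hi p k (GG k m t) (\<Gamma> t) + Hi p k (GG k m' t) (\<Gamma> t)"
        if "t \<in> space (lebesgue_on {0..1})" for k m m' t
      proof -
        have t: "t \<in> {0..1}" using that by simp
        show ?thesis using Hi_tri[OF fs bG[OF t, of k m] Gb[OF t] bG[OF t, of k m'], of k] Hi_sym[of p k "\<Gamma> t" "GG k m' t"] by simp
      qed
      show "Hi p k (GG k n t) (\<Gamma> t) \<le> Hi p k (GG k n t) (GG k m t) + Hi p k (GG k m t) (\<Gamma> t)"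
        if "t \<in> space (lebesgue_on {0..1})" for k n m t
      proof -
        have t: "t \<in> {0..1}" using that by simp
        show ?thesis using Hi_tri[OF fs bG[OF t, of k n] bG[OF t, of k m] Gb[OF t], of k] by simp
      qed
      show "AE t in lebesgue_on {0..1}. (\<lambda>m. Hi p k (GG k m t) (\<Gamma> t)) \<longlonglongrightarrow> 0" for k
        by (rule GG(2))
    qed
    then obtain n where n: "AE t in lebesgue_on {0..1}. eventually (\<lambda>k. Hi p k (GG k (n k) t) (\<Gamma> t) \<le> inverse (real (Suc k))) sequentially"
      by blast
    define G where "G k = GG k (n k)" for k
    have "AE t in lebesgue_on {0..1}. (\<lambda>k. Hi p i (G k t) (\<Gamma> t)) \<longlonglongrightarrow> 0" for i
      using n AE_space
    proof eventually_elim
      case (elim t)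
      then have t: "t \<in> {0..1}" by simp
      show ?case
      proof (rule tendsto_sandwich[OF _ _ tendsto_const LIMSEQ_inverse_real_of_nat])
        show "\<forall>\<^sub>F k in sequentially. 0 \<le> Hi p i (G k t) (\<Gamma> t)"
          unfolding G_def using Hi_nonneg[OF fs bG[OF t] Gb[OF t]] by simp
        show "\<forall>\<^sub>F k in sequentially. Hi p i (G k t) (\<Gamma> t) \<le> inverse (real (Suc k))"
          using elim(1) eventually_ge_at_top[of i]
        proof eventually_elim
          case (elim k)
          have "Hi p i (G k t) (\<Gamma> t) \<le> Hi p k (G k t) (\<Gamma> t)"
            unfolding G_def by (rule Hi_mono[OF fs bG[OF t] Gb[OF t] elim(2)])
          then show ?case using elim(1) unfolding G_def by linarith
        qed
      qed
    qed
    moreover have "\<forall>k. simple_mf p (G k)" unfolding G_def using GG(1) by simp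
    ultimately show ?thesis unfolding totally_measurable_mf_def by blast
  qed
  show ?thesis using b2t t2b t2s s2t by blast
qed

end
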